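(* Consider the no-show model with homogeneous costs and the network $(\mathcal G,\mathcal E)$ in the context. For $j\in[N]$, $\rho\ge0$, $\mathbf s\in\mathcal S$ and $p\ge1$, assign to each arc $(k,\ell)\in\mathcal E$ the length $g_{k\ell j}=f_{1j}(1-\bar\lambda_1,y_1)$ if $k=\texttt S$ and $\ell=(\bar\lambda_1,y_1)$; $g_{k\ell j}=f_{ij}(\bar\lambda_{i-1}-\bar\lambda_i+1,y_i)$ if $k=(\bar\lambda_{i-1},y_{i-1})\in\mathcal L(i-1)$ and $\ell=(\bar\lambda_i,y_i)\in\mathcal L(i)$, $i\in[2,n]$; $g_{k\ell j}=0$ if $\ell=\texttt E$. Then $$\omega'_j(\rho,\mathbf s)=\max_{\mathbf z}\sum_{(k,\ell)\in\mathcal E}g_{k\ell j}z_{k\ell}\ \text{ s.t. }\sum_{\ell:(k,\ell)\in\mathcal E}z_{k\ell}-\sum_{\ell:(\ell,k)\in\mathcal E}z_{\ell k}=\begin{cases}1&k=\texttt S\\0&k\ne\texttt S,\texttt E\\-1&k=\texttt E\end{cases}\ \forall k\in\mathcal G,\quad z_{k\ell}\ge0\ \forall(k,\ell)\in\mathcal E,$$ where $\omega'_j(\rho,\mathbf s)=\sup_{\boldsymbol\xi\in\Xi}\{g(\mathbf s,\boldsymbol\xi)-\rho\|\boldsymbol\xi-\widehat{\boldsymbol\xi}^j\|_p^p\}$.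
   Context: Notation: $[m]=\{1,\dots,m\}$. $n,N\ge1$, $T>0$, $\mathcal S=\{\mathbf s\in\mathbb R^n:\mathbf s\ge0,\sum_is_i\le T\}$. Homogeneous costs $c_1=\dots=c_n=1$, $d_1=\dots=d_n=d_0\ge0$, overtime $C\ge0$. Bounds $0\le u^L_i<u^U_i<\infty$; integer $K\in[n]$. $\Lambda=\{\boldsymbol\lambda\in\{0,1\}^n:\sum_i(1-\lambda_i)\le K\}$, $\Xi=\{(\boldsymbol\mu,\boldsymbol\lambda)\in\mathbb R^n\times\Lambda:u^L_i\lambda_i\le\mu_i\le u^U_i\lambda_i\}$, data $\widehat{\boldsymbol\xi}^j=(\widehat{\boldsymbol\mu}^j,\widehat{\boldsymbol\lambda}^j)\in\Xi$. $g(\mathbf s,\boldsymbol\xi)$ is the optimal value of $\min_{\mathbf w\in\mathbb R^{n+1},\mathbf v\in\mathbb R^n}\sum_{i}(c_i\lambda_iw_i+d_iv_i)+Cw_{n+1}$ s.t. $w_i-v_{i-1}=\mu_{i-1}+w_{i-1}-s_{i-1}$ ($i=2,\dots,n+1$), $\mathbf w\ge0,w_1=0,\mathbf v\ge0$. For $\lambda_i\in\{0,1\}$, $y_i\in\mathbb R$: $f_{ij}(\lambda_i,y_i)=\sup_{u^L_i\lambda_i\le\mu_i\le u^U_i\lambda_i}\{y_i(\mu_i-s_i)-\rho|\mu_i-\widehat\mu^j_i|^p-\rho|\lambda_i-\widehat\lambda^j_i|^p\}$. Network: $\mathcal Y_i=\{-d_0+m:m=0,\dots,n-i\}\cup\{C+m:m=0,\dots,n-i\}$,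 layers $\mathcal L(i)=\{(\bar\lambda,y):\bar\lambda\in\{0,\dots,K\},y\in\mathcal Y_i\}$, nodes $\mathcal G=\bigcup_{i=1}^n\mathcal L(i)\cup\{\texttt S,\texttt E\}$. Arcs: from $\texttt S$ to each $(\bar\lambda_1,y_1)\in\mathcal L(1)$ with $\bar\lambda_1\in\{0,1\}$; for $i\in[2,n]$ from $(\bar\lambda_{i-1},y_{i-1})\in\mathcal L(i-1)$ to $(\bar\lambda_i,y_i)\in\mathcal L(i)$ whenever $\bar\lambda_i\in\{\bar\lambda_{i-1},\bar\lambda_{i-1}+1\}$ and $y_{i-1}\in\{-d_0,\ y_i+(\bar\lambda_{i-1}-\bar\lambda_i+1)\}$; and from each node of $\mathcal L(n)$ to $\texttt E$. *)

theory Defs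
  imports Complex_Main
begin

text \<open>Vectors in R^n are functions nat => real, indexed by 1..n (values outside are irrelevant).
  Homogeneous costs: c_i = 1, d_i = d0.\<close>

definition g_val :: "nat \<Rightarrow> real \<Rightarrow> real \<Rightarrow> (nat \<Rightarrow> real) \<Rightarrow> (nat \<Rightarrow> real) \<Rightarrow> (nat \<Rightarrow> real) \<Rightarrow> real" where
  "g_val n d0 C s mu lam = Inf {(\<Sum>i=1..n. 1 * lam i * w i + d0 * v i) + C * w (n+1) | w v.
      (\<forall>i\<in>{1..n+1}. w i \<ge> 0) \<and> w 1 = 0 \<and> (\<forall>i\<in>{1..n}. v i \<ge> 0) \<and>
      (\<forall>i\<in>{2..n+1}. w i - v (i-1) = mu (i-1) + w (i-1) - s (i-1))}"

definition in_Xi :: "nat \<Rightarrow> nat \<Rightarrow> (nat \<Rightarrow> real) \<Rightarrow> (nat \<Rightarrow> real) \<Rightarrow> (nat \<Rightarrow> real) \<Rightarrow> (nat \<Rightarrow> real) \<Rightarrow> bool" where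
  "in_Xi n K uL uU mu lam \<longleftrightarrow>
     (\<forall>i\<in>{1..n}. lam i \<in> {0,1}) \<and> (\<Sum>i=1..n. 1 - lam i) \<le> real K \<and>
     (\<forall>i\<in>{1..n}. uL i * lam i \<le> mu i \<and> mu i \<le> uU i * lam i)"

definition omega' :: "nat \<Rightarrow> nat \<Rightarrow> real \<Rightarrow> real \<Rightarrow> (nat \<Rightarrow> real) \<Rightarrow> (nat \<Rightarrow> real) \<Rightarrow> real \<Rightarrow>
    (nat \<Rightarrow> real) \<Rightarrow> (nat \<Rightarrow> real) \<Rightarrow> (nat \<Rightarrow> real) \<Rightarrow> real \<Rightarrow> real" where
  "omega' n K d0 C uL uU p muh lamh s rho = Sup {g_val n d0 C s mu lam
      - rho * ((\<Sum>i=1..n. \<bar>mu i - muh i\<bar> powr p) + (\<Sum>i=1..n. \<bar>lam i - lamh i\<bar> powr p)) | mu lam.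
      in_Xi n K uL uU mu lam}"

definition f_val :: "(nat \<Rightarrow> real) \<Rightarrow> (nat \<Rightarrow> real) \<Rightarrow> real \<Rightarrow> (nat \<Rightarrow> real) \<Rightarrow> (nat \<Rightarrow> real) \<Rightarrow>
    (nat \<Rightarrow> real) \<Rightarrow> real \<Rightarrow> nat \<Rightarrow> real \<Rightarrow> real \<Rightarrow> real" where
  "f_val uL uU p muh lamh s rho i l y = Sup {y * (mu - s i) - rho * \<bar>mu - muh i\<bar> powr p
      - rho * \<bar>l - lamh i\<bar> powr p | mu. uL i * l \<le> mu \<and> mu \<le> uU i * l}"

text \<open>Nodes of the network: source S, sink E, and layer nodes Nd i lb y = (lb, y) in L(i).\<close>
datatype node = Src | Snk | Nd nat nat real

definition Ycal :: "nat \<Rightarrow> real \<Rightarrow> real \<Rightarrow> nat \<Rightarrow> real set" where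
  "Ycal n d0 C i = {- d0 + real m | m. m \<le> n - i} \<union> {C + real m | m. m \<le> n - i}"

definition Layer :: "nat \<Rightarrow> nat \<Rightarrow> real \<Rightarrow> real \<Rightarrow> nat \<Rightarrow> node set" where
  "Layer n K d0 C i = {Nd i lb y | lb y. lb \<le> K \<and> y \<in> Ycal n d0 C i}"

definition Nodes :: "nat \<Rightarrow> nat \<Rightarrow> real \<Rightarrow> real \<Rightarrow> node set" where
  "Nodes n K d0 C = (\<Union>i\<in>{1..n}. Layer n K d0 C i) \<union> {Src, Snk}"

definition Arcs :: "nat \<Rightarrow> nat \<Rightarrow> real \<Rightarrow> real \<Rightarrow> (node \<times> node) set" where
  "Arcs n K d0 C =
     {(Src, Nd 1 lb y) | lb y. Nd 1 lb y \<in> Layer n K d0 C 1 \<and> lb \<in> {0,1}}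
   \<union> {(Nd (i-1) lb' y', Nd i lb y) | i lb' y' lb y. 2 \<le> i \<and> i \<le> n \<and>
        Nd (i-1) lb' y' \<in> Layer n K d0 C (i-1) \<and> Nd i lb y \<in> Layer n K d0 C i \<and>
        (lb = lb' \<or> lb = lb' + 1) \<and> (y' = - d0 \<or> y' = y + (real lb' - real lb + 1))}
   \<union> {(k, Snk) | k. k \<in> Layer n K d0 C n}"

text \<open>Arc lengths g_{kl j} (F stands for f_{.j}: layer index, lambda, y).\<close>
fun arc_len :: "(nat \<Rightarrow> real \<Rightarrow> real \<Rightarrow> real) \<Rightarrow> node \<times> node \<Rightarrow> real" where
  "arc_len F (Src, Nd i lb y) = F 1 (1 - real lb) y"
| "arc_len F (Nd i' lb' y', Nd i lb y) = F i (real lb' - real lb + 1) y"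
| "arc_len F _ = 0"

definition flow_feasible :: "node set \<Rightarrow> (node \<times> node) set \<Rightarrow> (node \<times> node \<Rightarrow> real) \<Rightarrow> bool" where
  "flow_feasible G A z \<longleftrightarrow>
     (\<forall>a\<in>A. z a \<ge> 0) \<and>
     (\<forall>k\<in>G. (\<Sum>l\<in>{l. (k,l) \<in> A}. z (k,l)) - (\<Sum>l\<in>{l. (l,k) \<in> A}. z (l,k))
              = (if k = Src then 1 else if k = Snk then -1 else 0))"

end

theory Submission
  imports Defs "HOL-Library.FuncSet"
begin


lemma sbp:
  fixes y w :: "nat \<Rightarrow> real"
  shows "n \<ge> 1 \<Longrightarrow> (\<Sum>k=1..n. y k * (w (Suc k) - w k)) =
     (\<Sum>k=2..n. (y (k-1) - y k) * w k) + y n * w (Suc n) - y 1 * w 1"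
proof (induction n)
  case 0 then show ?case by simp
next
  case (Suc n)
  show ?case
  proof (cases "n = 0")
    case True then show ?thesis by (simp add: algebra_simps)
  next
    case False
    then have "n \<ge> 1" by simp
    have a: "(\<Sum>k=1..Suc n. y k * (w (Suc k) - w k)) = (\<Sum>k=1..n. y k * (w (Suc k) - w k)) + y (Suc n) * (w (Suc (Suc n)) - w (Suc n))"
      by simp
    have b: "(\<Sum>k=2..Suc n. (y (k-1) - y k) * w k) = (\<Sum>k=2..n. (y (k-1) - y k) * w k) + (y n - y (Suc n)) * w (Suc n)"
      using False by (simp add: sum.cl_ivl_Suc)
    from Suc.IH[OF \<open>n \<ge> 1\<close>] show ?thesis unfolding a b
      by (simp add: algebra_simps)
  qed
qed

lemma dual_identity:
  fixes y w v lam mu s :: "nat \<Rightarrow> real"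
  assumes n: "n \<ge> 1" and w1: "w 1 = 0"
    and cons: "\<forall>i\<in>{2..n+1}. w i - v (i-1) = mu (i-1) + w (i-1) - s (i-1)"
  shows "((\<Sum>i=1..n. 1 * lam i * w i + d0 * v i) + C * w (n+1)) - (\<Sum>k=1..n. y k * (mu k - s k))
    = (\<Sum>k=2..n. (lam k + y k - y (k-1)) * w k) + (C - y n) * w (n+1) + (\<Sum>k=1..n. (d0 + y k) * v k)"
proof -
  have c: "mu k - s k = (w (Suc k) - w k) - v k" if "k \<in> {1..n}" for k
    using cons[rule_format, of "Suc k"] that by auto
  have "(\<Sum>k=1..n. y k * (mu k - s k)) = (\<Sum>k=1..n. y k * (w (Suc k) - w k)) - (\<Sum>k=1..n. y k * v k)"
  proof -
    have "(\<Sum>k=1..n. y k * (mu k - s k)) = (\<Sum>k=1..n. y k * (w (Suc k) - w k) - y k * v k)"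
      by (rule sum.cong) (auto simp: c algebra_simps)
    then show ?thesis by (simp add: sum_subtractf)
  qed
  also have "\<dots> = (\<Sum>k=2..n. (y (k-1) - y k) * w k) + y n * w (Suc n) - (\<Sum>k=1..n. y k * v k)"
    using sbp[OF n, of y w] w1 by simp
  finally have e1: "(\<Sum>k=1..n. y k * (mu k - s k)) = (\<Sum>k=2..n. (y (k-1) - y k) * w k) + y n * w (Suc n) - (\<Sum>k=1..n. y k * v k)" .
  have e2: "(\<Sum>i=1..n. lam i * w i) = (\<Sum>i=2..n. lam i * w i)"
  proof -
    have "{1..n} = insert 1 {2..n}" using n by auto
    then show ?thesis using w1 by simp
  qed
  have "(\<Sum>i=1..n. 1 * lam i * w i + d0 * v i) = (\<Sum>i=2..n. lam i * w i) + (\<Sum>i=1..n. d0 * v i)"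
    using e2 by (simp add: sum.distrib)
  then show ?thesis using e1
    by (simp add: algebra_simps sum.distrib sum_subtractf sum_distrib_left)
qed




primrec wg :: "(nat \<Rightarrow> real) \<Rightarrow> nat \<Rightarrow> real" where
  "wg c 0 = 0"
| "wg c (Suc k) = (if k = 0 then 0 else max 0 (wg c k + c k))"

definition vg :: "(nat \<Rightarrow> real) \<Rightarrow> nat \<Rightarrow> real" where
  "vg c k = max 0 (- (wg c k + c k))"

primrec yb :: "nat \<Rightarrow> real \<Rightarrow> real \<Rightarrow> (nat \<Rightarrow> real) \<Rightarrow> (nat \<Rightarrow> real) \<Rightarrow> nat \<Rightarrow> real" where
  "yb n C d0 lam w 0 = (if w (Suc n) > 0 then C else - d0)"
| "yb n C d0 lam w (Suc m) = (if w (n - m) > 0 then yb n C d0 lam w m + lam (n - m) else - d0)"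

definition yg :: "nat \<Rightarrow> real \<Rightarrow> real \<Rightarrow> (nat \<Rightarrow> real) \<Rightarrow> (nat \<Rightarrow> real) \<Rightarrow> nat \<Rightarrow> real" where
  "yg n C d0 lam w k = yb n C d0 lam w (n - k)"

lemma yg_n: "yg n C d0 lam w n = (if w (Suc n) > 0 then C else - d0)"
  by (simp add: yg_def)

lemma yg_lt: "k < n \<Longrightarrow> yg n C d0 lam w k = (if w (Suc k) > 0 then yg n C d0 lam w (Suc k) + lam (Suc k) else - d0)"
proof -
  assume "k < n"
  then have e: "n - k = Suc (n - Suc k)" and e2: "n - (n - Suc k) = Suc k" by auto
  show ?thesis unfolding yg_def e yb.simps e2 ..
qed

definition dfeas :: "nat \<Rightarrow> real \<Rightarrow> real \<Rightarrow> (nat \<Rightarrow> real) \<Rightarrow> (nat \<Rightarrow> real) \<Rightarrow> bool" where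
  "dfeas n d0 C lam y \<longleftrightarrow> (\<forall>k\<in>{1..n}. y k \<ge> - d0) \<and> (\<forall>k\<in>{2..n}. y (k-1) \<le> y k + lam k) \<and> y n \<le> C"

lemma wg_nonneg: "wg c k \<ge> 0"
  by (cases k) auto

lemma wg_1: "wg c 1 = 0" by simp

lemma wg_Suc: "k \<ge> 1 \<Longrightarrow> wg c (Suc k) = max 0 (wg c k + c k)" by simp

lemma yg_ge:
  assumes "d0 \<ge> 0" "C \<ge> 0" "\<forall>k\<in>{1..n}. lam k \<ge> 0"
  shows "k \<le> n \<Longrightarrow> yg n C d0 lam w k \<ge> - d0"
proof (induction "n - k" arbitrary: k)
  case 0
  then have "k = n" by simp
  then show ?case using assms by (simp add: yg_n)
next
  case (Suc m)
  then have kn: "k < n" by simp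
  have "yg n C d0 lam w (Suc k) \<ge> - d0" using Suc.hyps(1)[of "Suc k"] Suc.hyps(2) by simp
  moreover have "lam (Suc k) \<ge> 0" using assms(3) kn by simp
  ultimately show ?case using kn by (simp add: yg_lt)
qed

lemma yg_dfeas:
  assumes "d0 \<ge> 0" "C \<ge> 0" "\<forall>k\<in>{1..n}. lam k \<ge> 0"
  shows "dfeas n d0 C lam (yg n C d0 lam w)"
  unfolding dfeas_def
proof (intro conjI ballI)
  fix k assume "k \<in> {1..n}" then show "yg n C d0 lam w k \<ge> - d0" using yg_ge[OF assms] by simp
next
  fix k assume k: "k \<in> {2..n}"
  then have a: "yg n C d0 lam w k \<ge> - d0" "lam k \<ge> 0" using yg_ge[OF assms] assms(3) by auto
  have "k - 1 < n" "Suc (k - 1) = k" using k by auto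
  then show "yg n C d0 lam w (k-1) \<le> yg n C d0 lam w k + lam k"
    using yg_lt[of "k-1" n C d0 lam w] a by auto
next
  show "yg n C d0 lam w n \<le> C" using assms by (simp add: yg_n)
qed

definition gset where
  "gset n d0 C s mu lam = {(\<Sum>i=1..n. 1 * lam i * w i + d0 * v i) + C * w (n+1) | w v.
      (\<forall>i\<in>{1..n+1}. w i \<ge> 0) \<and> w 1 = 0 \<and> (\<forall>i\<in>{1..n}. v i \<ge> 0) \<and>
      (\<forall>i\<in>{2..n+1}. w i - v (i-1) = mu (i-1) + w (i-1) - s (i-1))}"

lemma g_val_gset: "g_val n d0 C s mu lam = Inf (gset n d0 C s mu lam)"
  unfolding g_val_def gset_def ..

lemma greedy_in:
  fixes mu s :: "nat \<Rightarrow> real"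
  defines "c \<equiv> (\<lambda>k. mu k - s k)"
  shows "(\<Sum>i=1..n. 1 * lam i * wg c i + d0 * vg c i) + C * wg c (n+1) \<in> gset n d0 C s mu lam"
  unfolding gset_def
proof (intro CollectI exI conjI)
  show "(\<forall>i\<in>{1..n+1}. wg c i \<ge> 0)" using wg_nonneg by auto
  show "wg c 1 = 0" by simp
  show "\<forall>i\<in>{1..n}. vg c i \<ge> 0" by (simp add: vg_def)
  show "\<forall>i\<in>{2..n+1}. wg c i - vg c (i-1) = mu (i-1) + wg c (i-1) - s (i-1)"
  proof
    fix i assume i: "i \<in> {2..n+1}"
    then obtain k where k: "i = Suc k" "k \<ge> 1" by (cases i) auto
    show "wg c i - vg c (i-1) = mu (i-1) + wg c (i-1) - s (i-1)"
      using k by (simp add: vg_def c_def max_def)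
  qed
qed (rule refl)

lemma weak_duality:
  fixes y w v lam mu s :: "nat \<Rightarrow> real"
  assumes n: "n \<ge> 1" and lam: "\<forall>k\<in>{1..n}. lam k \<ge> 0" and df: "dfeas n d0 C lam y"
    and x: "x \<in> gset n d0 C s mu lam"
  shows "(\<Sum>k=1..n. y k * (mu k - s k)) \<le> x"
proof -
  obtain w v where x: "x = (\<Sum>i=1..n. 1 * lam i * w i + d0 * v i) + C * w (n+1)"
    and wn: "\<forall>i\<in>{1..n+1}. w i \<ge> 0" and w1: "w 1 = 0" and vn: "\<forall>i\<in>{1..n}. v i \<ge> 0"
    and cons: "\<forall>i\<in>{2..n+1}. w i - v (i-1) = mu (i-1) + w (i-1) - s (i-1)"
    using x unfolding gset_def by blast
  have "x - (\<Sum>k=1..n. y k * (mu k - s k)) =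
     (\<Sum>k=2..n. (lam k + y k - y (k-1)) * w k) + (C - y n) * w (n+1) + (\<Sum>k=1..n. (d0 + y k) * v k)"
    unfolding x by (rule dual_identity[OF n w1 cons])
  moreover have "(\<Sum>k=2..n. (lam k + y k - y (k-1)) * w k) \<ge> 0"
  proof (rule sum_nonneg)
    fix k assume k: "k \<in> {2..n}"
    then have "y (k-1) \<le> y k + lam k" using df unfolding dfeas_def by blast
    moreover have "w k \<ge> 0" using wn k by auto
    ultimately show "(lam k + y k - y (k-1)) * w k \<ge> 0" by simp
  qed
  moreover have "(C - y n) * w (n+1) \<ge> 0"
    using df wn unfolding dfeas_def by (intro mult_nonneg_nonneg) auto
  moreover have "(\<Sum>k=1..n. (d0 + y k) * v k) \<ge> 0"
  proof (rule sum_nonneg)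
    fix k assume k: "k \<in> {1..n}"
    then have "y k \<ge> - d0" using df unfolding dfeas_def by blast
    moreover have "v k \<ge> 0" using vn k by auto
    ultimately show "(d0 + y k) * v k \<ge> 0" by simp
  qed
  ultimately show ?thesis by linarith
qed

lemma g_val_ge:
  assumes n: "n \<ge> 1" and lam: "\<forall>k\<in>{1..n}. lam k \<ge> 0" and df: "dfeas n d0 C lam y"
  shows "(\<Sum>k=1..n. y k * (mu k - s k)) \<le> g_val n d0 C s mu lam"
proof -
  have "gset n d0 C s mu lam \<noteq> {}" using greedy_in by blast
  then show ?thesis unfolding g_val_gset
    by (rule cInf_greatest) (rule weak_duality[OF n lam df])
qed

lemma g_val_eq:
  fixes mu s :: "nat \<Rightarrow> real"
  defines "c \<equiv> (\<lambda>k. mu k - s k)"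
  assumes n: "n \<ge> 1" and lam: "\<forall>k\<in>{1..n}. lam k \<ge> 0" and d0: "d0 \<ge> 0" and C: "C \<ge> 0"
  shows "g_val n d0 C s mu lam = (\<Sum>k=1..n. yg n C d0 lam (wg c) k * (mu k - s k))"
proof -
  let ?y = "yg n C d0 lam (wg c)"
  have df: "dfeas n d0 C lam ?y" using yg_dfeas[OF d0 C lam] .
  have ge: "(\<Sum>k=1..n. ?y k * (mu k - s k)) \<le> g_val n d0 C s mu lam"
    by (rule g_val_ge[OF n lam df])
  let ?x = "(\<Sum>i=1..n. 1 * lam i * wg c i + d0 * vg c i) + C * wg c (n+1)"
  have xin: "?x \<in> gset n d0 C s mu lam" unfolding c_def by (rule greedy_in)
  have bdd: "bdd_below (gset n d0 C s mu lam)"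
    using weak_duality[OF n lam df] by (auto simp: bdd_below_def)
  have le: "g_val n d0 C s mu lam \<le> ?x" unfolding g_val_gset using cInf_lower[OF xin bdd] .
  have cons: "\<forall>i\<in>{2..n+1}. wg c i - vg c (i-1) = mu (i-1) + wg c (i-1) - s (i-1)"
    using xin unfolding gset_def
  proof -
    show ?thesis
    proof
      fix i assume i: "i \<in> {2..n+1}"
      then obtain k where k: "i = Suc k" "k \<ge> 1" by (cases i) auto
      show "wg c i - vg c (i-1) = mu (i-1) + wg c (i-1) - s (i-1)"
        using k by (simp add: vg_def c_def max_def)
    qed
  qed
  have id: "?x - (\<Sum>k=1..n. ?y k * (mu k - s k)) =
     (\<Sum>k=2..n. (lam k + ?y k - ?y (k-1)) * wg c k) + (C - ?y n) * wg c (n+1) + (\<Sum>k=1..n. (d0 + ?y k) * vg c k)"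
    by (rule dual_identity[OF n wg_1 cons])
  have z1: "(\<Sum>k=2..n. (lam k + ?y k - ?y (k-1)) * wg c k) = 0"
  proof (rule sum.neutral, rule ballI)
    fix k assume k: "k \<in> {2..n}"
    have "k - 1 < n" "Suc (k - 1) = k" using k by auto
    then have "wg c k > 0 \<Longrightarrow> ?y (k-1) = ?y k + lam k" using yg_lt[of "k-1" n C d0 lam "wg c"] by auto
    moreover have "wg c k \<ge> 0" by (rule wg_nonneg)
    ultimately show "(lam k + ?y k - ?y (k-1)) * wg c k = 0" by force
  qed
  have z2: "(C - ?y n) * wg c (n+1) = 0"
    using wg_nonneg[of c "n+1"] by (cases "wg c (n+1) > 0") (auto simp: yg_n)
  have z3: "(\<Sum>k=1..n. (d0 + ?y k) * vg c k) = 0"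
  proof (rule sum.neutral, rule ballI)
    fix k assume k: "k \<in> {1..n}"
    show "(d0 + ?y k) * vg c k = 0"
    proof (cases "vg c k > 0")
      case True
      then have "wg c k + c k < 0" by (simp add: vg_def max_def split: if_splits)
      then have w0: "wg c (Suc k) = 0" using k by simp
      have "?y k = - d0"
      proof (cases "k = n")
        case True then show ?thesis using w0 by (simp add: yg_n)
      next
        case False then have "k < n" using k by simp
        then show ?thesis using w0 by (simp add: yg_lt)
      qed
      then show ?thesis by simp
    next
      case False then have "vg c k = 0" by (simp add: vg_def)
      then show ?thesis by simp
    qed
  qed
  from id z1 z2 z3 have "?x = (\<Sum>k=1..n. ?y k * (mu k - s k))" by linarith
  with le ge show ?thesis by linarith
qed




lemma finite_Ycal: "finite (Ycal n d0 C t)"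
  unfolding Ycal_def by (intro finite_UnI finite_image_set) auto

lemma neg_d0_Ycal: "- d0 \<in> Ycal n d0 C t"
  unfolding Ycal_def by force

lemma C_Ycal: "C \<in> Ycal n d0 C t"
  unfolding Ycal_def by force

locale net =
  fixes n K :: nat and d0 C :: real and F :: "nat \<Rightarrow> real \<Rightarrow> real \<Rightarrow> real"
  assumes n1: "n \<ge> 1" and d0: "d0 \<ge> 0" and C0: "C \<ge> 0"
begin

definition tr :: "nat \<times> real \<Rightarrow> nat \<times> real \<Rightarrow> bool" where
  "tr x b \<longleftrightarrow> (fst b = fst x \<or> fst b = Suc (fst x)) \<and>
     (snd x = - d0 \<or> snd x = snd b + (real (fst x) - real (fst b) + 1))"

definition NS :: "nat \<Rightarrow> (nat \<times> real) set" where
  "NS t = {..K} \<times> Ycal n d0 C t"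

definition PS :: "nat \<Rightarrow> (nat \<Rightarrow> nat \<times> real) set" where
  "PS i = {P \<in> PiE {i..n} NS. \<forall>t\<in>{Suc i..n}. tr (P (t-1)) (P t)}"

definition lamP :: "(nat \<Rightarrow> nat \<times> real) \<Rightarrow> nat \<Rightarrow> real" where
  "lamP P t = real (fst (P (t-1))) - real (fst (P t)) + 1"

definition len :: "nat \<Rightarrow> (nat \<Rightarrow> nat \<times> real) \<Rightarrow> real" where
  "len i P = (\<Sum>t\<in>{Suc i..n}. F t (lamP P t) (snd (P t)))"

definition TS :: "nat \<Rightarrow> nat \<times> real \<Rightarrow> (nat \<Rightarrow> nat \<times> real) set" where
  "TS i x = {P \<in> PS i. P i = x}"

definition V :: "nat \<Rightarrow> nat \<times> real \<Rightarrow> real" where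
  "V i x = Max (len i ` TS i x)"

definition live :: "nat \<Rightarrow> nat \<times> real \<Rightarrow> bool" where
  "live i x \<longleftrightarrow> TS i x \<noteq> {}"

lemma finite_NS: "finite (NS t)"
  unfolding NS_def using finite_Ycal by auto

lemma finite_TS: "finite (TS i x)"
proof -
  have "finite (PiE {i..n} NS)" by (rule finite_PiE) (auto simp: finite_NS)
  then show ?thesis unfolding TS_def PS_def by (rule rev_finite_subset) auto
qed

lemma V_ge: "P \<in> TS i x \<Longrightarrow> len i P \<le> V i x"
  unfolding V_def using finite_TS by (intro Max_ge) auto

lemma V_attained: "live i x \<Longrightarrow> \<exists>P\<in>TS i x. len i P = V i x"
proof -
  assume "live i x"
  then have "len i ` TS i x \<noteq> {}" unfolding live_def by auto
  from Max_in[OF finite_imageI[OF finite_TS] this] show ?thesis unfolding V_def by auto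
qed

lemma TS_mem: "P \<in> TS i x \<Longrightarrow> i \<le> n \<Longrightarrow> x \<in> NS i"
  unfolding TS_def PS_def by (auto simp: PiE_iff)

lemma ext_path:
  assumes j: "j < n" and P: "P \<in> TS (Suc j) b" and x: "x \<in> NS j" and t: "tr x b"
  shows "P(j := x) \<in> TS j x"
    and "len j (P(j := x)) = F (Suc j) (real (fst x) - real (fst b) + 1) (snd b) + len (Suc j) P"
proof -
  have PP: "P \<in> PiE {Suc j..n} NS" "\<forall>t\<in>{Suc (Suc j)..n}. tr (P (t-1)) (P t)" "P (Suc j) = b"
    using P unfolding TS_def PS_def by auto
  have "P(j := x) \<in> PiE {j..n} NS"
    using PP(1) x j by (auto simp: PiE_iff extensional_def)
  moreover have "\<forall>t\<in>{Suc j..n}. tr ((P(j:=x)) (t-1)) ((P(j:=x)) t)"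
  proof
    fix t assume tt: "t \<in> {Suc j..n}"
    show "tr ((P(j:=x)) (t-1)) ((P(j:=x)) t)"
    proof (cases "t = Suc j")
      case True then show ?thesis using t PP(3) by simp
    next
      case False then have "t \<in> {Suc (Suc j)..n}" using tt by auto
      then show ?thesis using PP(2) by auto
    qed
  qed
  ultimately show "P(j := x) \<in> TS j x" unfolding TS_def PS_def by auto
  have "len j (P(j := x)) = F (Suc j) (lamP (P(j:=x)) (Suc j)) (snd ((P(j:=x)) (Suc j)))
      + (\<Sum>t\<in>{Suc (Suc j)..n}. F t (lamP (P(j:=x)) t) (snd ((P(j:=x)) t)))"
    unfolding len_def using j by (subst sum.atLeast_Suc_atMost) auto
  also have "(\<Sum>t\<in>{Suc (Suc j)..n}. F t (lamP (P(j:=x)) t) (snd ((P(j:=x)) t))) = len (Suc j) P"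
    unfolding len_def by (rule sum.cong) (auto simp: lamP_def)
  also have "lamP (P(j:=x)) (Suc j) = real (fst x) - real (fst b) + 1"
    using PP(3) j by (simp add: lamP_def)
  also have "snd ((P(j:=x)) (Suc j)) = snd b" using PP(3) by simp
  finally show "len j (P(j := x)) = F (Suc j) (real (fst x) - real (fst b) + 1) (snd b) + len (Suc j) P" .
qed

lemma ext_V:
  assumes j: "j < n" and l: "live (Suc j) b" and x: "x \<in> NS j" and t: "tr x b"
  shows "live j x" and "V j x \<ge> F (Suc j) (real (fst x) - real (fst b) + 1) (snd b) + V (Suc j) b"
proof -
  obtain P where P: "P \<in> TS (Suc j) b" "len (Suc j) P = V (Suc j) b" using V_attained[OF l] by blast
  show "live j x" using ext_path(1)[OF j P(1) x t] unfolding live_def by auto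
  show "V j x \<ge> F (Suc j) (real (fst x) - real (fst b) + 1) (snd b) + V (Suc j) b"
    using V_ge[OF ext_path(1)[OF j P(1) x t]] ext_path(2)[OF j P(1) x t] P(2) by simp
qed

lemma live_n: assumes "x \<in> NS n" shows "live n x" and "V n x = 0"
proof -
  let ?P = "(\<lambda>t. undefined)(n := x)"
  have "?P \<in> TS n x" using assms unfolding TS_def PS_def by (auto simp: PiE_iff extensional_def)
  then show "live n x" unfolding live_def by auto
  have "len n P = 0" for P unfolding len_def by simp
  then have "len n ` TS n x = {0}" using \<open>?P \<in> TS n x\<close> by auto
  then show "V n x = 0" unfolding V_def by simp
qed

end



context net begin

abbreviation "GG \<equiv> Nodes n K d0 C"
abbreviation "AA \<equiv> Arcs n K d0 C"

lemma Layer_Nd: "Nd i lb y \<in> Layer n K d0 C t \<longleftrightarrow> i = t \<and> (lb, y) \<in> NS t"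
  unfolding Layer_def NS_def by auto

lemma Layer_Src: "Src \<notin> Layer n K d0 C t" and Layer_Snk: "Snk \<notin> Layer n K d0 C t"
  unfolding Layer_def by auto

lemma Layer_eq: "Layer n K d0 C t = (\<lambda>(lb, y). Nd t lb y) ` NS t"
  unfolding Layer_def NS_def by auto

lemma Nodes_Nd: "Nd i lb y \<in> GG \<longleftrightarrow> i \<in> {1..n} \<and> (lb, y) \<in> NS i"
  unfolding Nodes_def by (auto simp: Layer_Nd)

lemma Src_G: "Src \<in> GG" and Snk_G: "Snk \<in> GG"
  unfolding Nodes_def by auto

lemma finite_G: "finite GG"
  unfolding Nodes_def Layer_eq using finite_NS by auto

lemma tr_src: "tr (0, - d0) (lb, y) \<longleftrightarrow> lb \<in> {0, 1}"
  unfolding tr_def by auto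

lemma arc_cases:
  assumes "(k, l) \<in> AA"
  shows "(k = Src \<and> (\<exists>lb y. l = Nd 1 lb y \<and> (lb, y) \<in> NS 1 \<and> tr (0, - d0) (lb, y)))
    \<or> (\<exists>j lb' y' lb y. k = Nd j lb' y' \<and> l = Nd (Suc j) lb y \<and> 1 \<le> j \<and> j < n \<and>
         (lb', y') \<in> NS j \<and> (lb, y) \<in> NS (Suc j) \<and> tr (lb', y') (lb, y))
    \<or> (\<exists>lb y. k = Nd n lb y \<and> l = Snk \<and> (lb, y) \<in> NS n)"
proof -
  from assms consider
    (a) lb y where "k = Src" "l = Nd 1 lb y" "Nd 1 lb y \<in> Layer n K d0 C 1" "lb \<in> {0,1}"
  | (b) i lb' y' lb y where "k = Nd (i-1) lb' y'" "l = Nd i lb y" "2 \<le> i" "i \<le> n"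
        "Nd (i-1) lb' y' \<in> Layer n K d0 C (i-1)" "Nd i lb y \<in> Layer n K d0 C i"
        "(lb = lb' \<or> lb = lb' + 1)" "(y' = - d0 \<or> y' = y + (real lb' - real lb + 1))"
  | (c) "l = Snk" "k \<in> Layer n K d0 C n"
    unfolding Arcs_def by blast
  then show ?thesis
  proof cases
    case a then show ?thesis by (auto simp: Layer_Nd tr_src)
  next
    case b
    then obtain j where j: "i = Suc j" by (cases i) auto
    show ?thesis
      apply (rule disjI2, rule disjI1)
      apply (rule exI[of _ j], rule exI[of _ lb'], rule exI[of _ y'], rule exI[of _ lb], rule exI[of _ y])
      using b j by (auto simp: Layer_Nd tr_def)
  next
    case c
    then obtain lb y where "k = Nd n lb y" "(lb, y) \<in> NS n" unfolding Layer_def NS_def by auto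
    then show ?thesis using c by auto
  qed
qed

lemma arc_src: "(lb, y) \<in> NS 1 \<Longrightarrow> tr (0, - d0) (lb, y) \<Longrightarrow> (Src, Nd 1 lb y) \<in> AA"
  unfolding Arcs_def by (auto simp: Layer_Nd tr_src)

lemma arc_mid: "1 \<le> j \<Longrightarrow> j < n \<Longrightarrow> (lb', y') \<in> NS j \<Longrightarrow> (lb, y) \<in> NS (Suc j) \<Longrightarrow>
   tr (lb', y') (lb, y) \<Longrightarrow> (Nd j lb' y', Nd (Suc j) lb y) \<in> AA"
  unfolding Arcs_def
  apply (rule UnI1, rule UnI2)
  apply (rule CollectI)
  apply (rule exI[of _ "Suc j"], rule exI[of _ lb'], rule exI[of _ y'], rule exI[of _ lb], rule exI[of _ y])
  by (auto simp: Layer_Nd tr_def)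

lemma arc_snk: "(lb, y) \<in> NS n \<Longrightarrow> (Nd n lb y, Snk) \<in> AA"
  unfolding Arcs_def by (auto simp: Layer_Nd)

lemma A_sub: "AA \<subseteq> GG \<times> GG"
proof
  fix a assume a: "a \<in> AA"
  obtain k l where kl: "a = (k, l)" by (cases a)
  from arc_cases[of k l] a kl show "a \<in> GG \<times> GG"
    using n1 by (auto simp: Src_G Snk_G Nodes_Nd)
qed

lemma finite_A: "finite AA"
  using A_sub finite_G by (meson finite_SigmaI rev_finite_subset)

definition outf :: "(node \<times> node \<Rightarrow> real) \<Rightarrow> node \<Rightarrow> real" where
  "outf z k = (\<Sum>l\<in>{l. (k, l) \<in> AA}. z (k, l))"
definition inflow :: "(node \<times> node \<Rightarrow> real) \<Rightarrow> node \<Rightarrow> real" where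
  "inflow z k = (\<Sum>l\<in>{l. (l, k) \<in> AA}. z (l, k))"

lemma finite_out: "finite {l. (k, l) \<in> AA}"
  by (rule finite_subset[of _ "snd ` AA"]) (use finite_A in force)+
lemma finite_in: "finite {l. (l, k) \<in> AA}"
  by (rule finite_subset[of _ "fst ` AA"]) (use finite_A in force)+

lemma feas_cons: "flow_feasible GG AA z \<Longrightarrow> k \<in> GG \<Longrightarrow>
    outf z k - inflow z k = (if k = Src then 1 else if k = Snk then -1 else 0)"
  unfolding flow_feasible_def outf_def inflow_def by blast

lemma arc_le_in: "flow_feasible GG AA z \<Longrightarrow> (k, l) \<in> AA \<Longrightarrow> z (k, l) \<le> inflow z l"
  unfolding inflow_def flow_feasible_def
  by (rule member_le_sum) (use finite_in in auto)

lemma dead_zero: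
  assumes fz: "flow_feasible GG AA z"
  shows "Nd i lb y \<in> GG \<Longrightarrow> \<not> live i (lb, y) \<Longrightarrow> inflow z (Nd i lb y) = 0"
proof (induction "n - i" arbitrary: i lb y rule: less_induct)
  case less
  have i: "i \<in> {1..n}" and x: "(lb, y) \<in> NS i" using less.prems(1) by (auto simp: Nodes_Nd)
  have "i \<noteq> n" using live_n(1)[of "(lb,y)"] x less.prems(2) by auto
  then have ilt: "i < n" using i by auto
  have zout: "z (Nd i lb y, l) = 0" if l: "(Nd i lb y, l) \<in> AA" for l
  proof -
    from arc_cases[OF l] ilt obtain lb2 y2 where l2: "l = Nd (Suc i) lb2 y2" "(lb2, y2) \<in> NS (Suc i)"
      "tr (lb, y) (lb2, y2)" by auto
    have "\<not> live (Suc i) (lb2, y2)" using ext_V(1)[OF ilt _ x l2(3)] less.prems(2) by blast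
    moreover have "Nd (Suc i) lb2 y2 \<in> GG" using l2 ilt by (auto simp: Nodes_Nd)
    ultimately have "inflow z l = 0" using less.hyps[of "Suc i"] ilt l2(1) by auto
    moreover have "z (Nd i lb y, l) \<ge> 0" using fz l unfolding flow_feasible_def by blast
    ultimately show ?thesis using arc_le_in[OF fz l] by linarith
  qed
  have "outf z (Nd i lb y) = 0" unfolding outf_def by (rule sum.neutral) (use zout in auto)
  then show ?case using feas_cons[OF fz less.prems(1)] by simp
qed

definition pot :: "node \<Rightarrow> real" where
  "pot k = (case k of Src \<Rightarrow> V 0 (0, - d0) | Snk \<Rightarrow> 0
     | Nd i lb y \<Rightarrow> (if live i (lb, y) then V i (lb, y) else 0))"

lemma arc_bound:
  assumes fz: "flow_feasible GG AA z" and a: "a \<in> AA"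
  shows "arc_len F a * z a \<le> (pot (fst a) - pot (snd a)) * z a"
proof -
  obtain k l where kl: "a = (k, l)" by (cases a)
  have z0: "z a \<ge> 0" using fz a unfolding flow_feasible_def by blast
  have deadz: "z a = 0" if "l = Nd i lb y" "\<not> live i (lb, y)" for i lb y
  proof -
    have "l \<in> GG" using A_sub a kl by auto
    then have "inflow z l = 0" using dead_zero[OF fz] that by auto
    then show ?thesis using arc_le_in[OF fz, of k l] a kl z0 by auto
  qed
  have kla: "(k, l) \<in> AA" using a kl by simp
  have main: "z a = 0 \<or> arc_len F a \<le> pot k - pot l"
    using arc_cases[OF kla]
  proof (elim disjE exE conjE)
    fix lb y assume h: "k = Src" "l = Nd 1 lb y" "(lb, y) \<in> NS 1" "tr (0, - d0) (lb, y)"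
    show ?thesis
    proof (cases "live 1 (lb, y)")
      case True
      have x: "(0::nat, - d0) \<in> NS 0" unfolding NS_def using neg_d0_Ycal by auto
      have "V 0 (0, - d0) \<ge> F 1 (real 0 - real lb + 1) y + V 1 (lb, y)"
        using ext_V(2)[of 0 "(lb,y)" "(0, - d0)"] n1 True x h(4) by simp
      then show ?thesis using h True kl by (simp add: pot_def)
    next
      case False then show ?thesis using deadz h by blast
    qed
  next
    fix j lb' y' lb y assume h: "k = Nd j lb' y'" "l = Nd (Suc j) lb y" "1 \<le> j" "j < n"
      "(lb', y') \<in> NS j" "(lb, y) \<in> NS (Suc j)" "tr (lb', y') (lb, y)"
    show ?thesis
    proof (cases "live (Suc j) (lb, y)")
      case True
      have "live j (lb', y')" "V j (lb', y') \<ge> F (Suc j) (real lb' - real lb + 1) y + V (Suc j) (lb, y)"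
        using ext_V[OF h(4) True h(5) h(7)] by simp_all
      then show ?thesis using h True kl by (simp add: pot_def)
    next
      case False then show ?thesis using deadz h by blast
    qed
  next
    fix lb y assume h: "k = Nd n lb y" "l = Snk" "(lb, y) \<in> NS n"
    then show ?thesis using live_n[OF h(3)] kl by (simp add: pot_def)
  qed
  then show ?thesis using z0 kl by (auto intro: mult_right_mono)
qed

lemma sum_out: "(\<Sum>a\<in>AA. f (fst a) * z a) = (\<Sum>k\<in>GG. f k * outf z k)"
proof -
  have "AA = Sigma GG (\<lambda>k. {l. (k, l) \<in> AA})" using A_sub by auto
  then have "(\<Sum>a\<in>AA. f (fst a) * z a) = (\<Sum>(k,l)\<in>Sigma GG (\<lambda>k. {l. (k, l) \<in> AA}). f k * z (k, l))"
    by (simp add: case_prod_beta)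
  also have "\<dots> = (\<Sum>k\<in>GG. \<Sum>l\<in>{l. (k, l) \<in> AA}. f k * z (k, l))"
    by (rule sum.Sigma[symmetric]) (use finite_G finite_out in auto)
  finally show ?thesis unfolding outf_def by (simp add: sum_distrib_left)
qed

lemma sum_in: "(\<Sum>a\<in>AA. f (snd a) * z a) = (\<Sum>k\<in>GG. f k * inflow z k)"
proof -
  have e: "AA = prod.swap ` Sigma GG (\<lambda>k. {l. (l, k) \<in> AA})" using A_sub by force
  have "(\<Sum>a\<in>AA. f (snd a) * z a) = (\<Sum>a\<in>Sigma GG (\<lambda>k. {l. (l, k) \<in> AA}). f (fst a) * z (prod.swap a))"
    by (subst e, subst sum.reindex) (auto simp: comp_def)
  also have "\<dots> = (\<Sum>(k,l)\<in>Sigma GG (\<lambda>k. {l. (l, k) \<in> AA}). f k * z (l, k))"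
    by (rule sum.cong) auto
  also have "\<dots> = (\<Sum>k\<in>GG. \<Sum>l\<in>{l. (l, k) \<in> AA}. f k * z (l, k))"
    by (rule sum.Sigma[symmetric]) (use finite_G finite_in in auto)
  finally show ?thesis unfolding inflow_def by (simp add: sum_distrib_left)
qed

lemma flow_upper:
  assumes fz: "flow_feasible GG AA z"
  shows "(\<Sum>a\<in>AA. arc_len F a * z a) \<le> V 0 (0, - d0)"
proof -
  have "(\<Sum>a\<in>AA. arc_len F a * z a) \<le> (\<Sum>a\<in>AA. (pot (fst a) - pot (snd a)) * z a)"
    by (rule sum_mono) (rule arc_bound[OF fz])
  also have "\<dots> = (\<Sum>a\<in>AA. pot (fst a) * z a) - (\<Sum>a\<in>AA. pot (snd a) * z a)"
    by (simp add: left_diff_distrib sum_subtractf)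
  also have "\<dots> = (\<Sum>k\<in>GG. pot k * (outf z k - inflow z k))"
    unfolding sum_out sum_in by (simp add: right_diff_distrib sum_subtractf)
  also have "\<dots> = (\<Sum>k\<in>GG. pot k * (if k = Src then 1 else if k = Snk then -1 else 0))"
    by (rule sum.cong) (auto simp: feas_cons[OF fz])
  also have "\<dots> = pot Src - pot Snk"
  proof -
    have "(\<Sum>k\<in>GG. pot k * (if k = Src then 1 else if k = Snk then -1 else 0))
        = (\<Sum>k\<in>GG. (if k = Src then pot Src else 0) + (if k = Snk then - pot Snk else 0))"
      by (rule sum.cong) auto
    also have "\<dots> = pot Src - pot Snk"
      by (simp add: sum.distrib finite_G Src_G Snk_G)
    finally show ?thesis .
  qed
  also have "\<dots> = V 0 (0, - d0)" by (simp add: pot_def)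
  finally show ?thesis .
qed

end



context net begin

definition nd :: "(nat \<Rightarrow> nat \<times> real) \<Rightarrow> nat \<Rightarrow> node" where
  "nd P t = (if t = 0 then Src else if t = Suc n then Snk else Nd t (fst (P t)) (snd (P t)))"

definition PA :: "(nat \<Rightarrow> nat \<times> real) \<Rightarrow> (node \<times> node) set" where
  "PA P = (\<lambda>t. (nd P t, nd P (Suc t))) ` {0..n}"

definition zP :: "(nat \<Rightarrow> nat \<times> real) \<Rightarrow> node \<times> node \<Rightarrow> real" where
  "zP P a = (if a \<in> PA P then 1 else 0)"

lemma nd_inj: "t \<le> Suc n \<Longrightarrow> t' \<le> Suc n \<Longrightarrow> nd P t = nd P t' \<Longrightarrow> t = t'"
  unfolding nd_def by (auto split: if_splits)

lemma TS0_props: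
  assumes P: "P \<in> TS 0 (0, - d0)"
  shows "P 0 = (0, - d0)" "\<And>t. t \<le> n \<Longrightarrow> P t \<in> NS t" "\<And>t. 1 \<le> t \<Longrightarrow> t \<le> n \<Longrightarrow> tr (P (t-1)) (P t)"
  using P unfolding TS_def PS_def by (auto simp: PiE_iff)

lemma PA_sub: assumes P: "P \<in> TS 0 (0, - d0)" shows "PA P \<subseteq> AA"
proof
  fix a assume "a \<in> PA P"
  then obtain t where t: "t \<le> n" "a = (nd P t, nd P (Suc t))" unfolding PA_def by auto
  note pp = TS0_props[OF P]
  consider "t = 0" | "1 \<le> t" "t < n" | "t = n" "t \<ge> 1" using t n1 by linarith
  then show "a \<in> AA"
  proof cases
    case 1
    have "tr (P 0) (P 1)" using pp(3)[of 1] n1 by simp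
    then have "(Src, Nd 1 (fst (P 1)) (snd (P 1))) \<in> AA"
      using arc_src[of "fst (P 1)" "snd (P 1)"] pp(1) pp(2)[of 1] n1 by simp
    then show ?thesis using 1 t n1 by (simp add: nd_def)
  next
    case 2
    have "tr (P t) (P (Suc t))" using pp(3)[of "Suc t"] 2 by simp
    then have "(Nd t (fst (P t)) (snd (P t)), Nd (Suc t) (fst (P (Suc t))) (snd (P (Suc t)))) \<in> AA"
      using arc_mid[of t "fst (P t)" "snd (P t)" "fst (P (Suc t))" "snd (P (Suc t))"] 2 pp(2)[of t] pp(2)[of "Suc t"]
      by simp
    then show ?thesis using 2 t by (simp add: nd_def)
  next
    case 3
    have "(Nd n (fst (P n)) (snd (P n)), Snk) \<in> AA" using arc_snk[of "fst (P n)" "snd (P n)"] pp(2)[of n] by simp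
    then show ?thesis using 3 t by (simp add: nd_def)
  qed
qed

lemma sum_ind:
  assumes "finite S" "X \<subseteq> S"
  shows "(\<Sum>l\<in>S. (if l \<in> X then 1 else 0 :: real)) = real (card X)"
proof -
  have "(\<Sum>l\<in>S. (if l \<in> X then 1 else 0 :: real)) = (\<Sum>l\<in>{l\<in>S. l \<in> X}. 1)"
    by (rule sum.inter_filter[symmetric]) (rule assms(1))
  also have "{l\<in>S. l \<in> X} = X" using assms(2) by auto
  finally show ?thesis by simp
qed

lemma out_PA:
  assumes "t0 \<le> n"
  shows "{l. (nd P t0, l) \<in> PA P} = {nd P (Suc t0)}"
proof
  show "{nd P (Suc t0)} \<subseteq> {l. (nd P t0, l) \<in> PA P}"
    unfolding PA_def using assms by (auto intro!: image_eqI[of _ _ t0])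
  show "{l. (nd P t0, l) \<in> PA P} \<subseteq> {nd P (Suc t0)}"
  proof
    fix l assume "l \<in> {l. (nd P t0, l) \<in> PA P}"
    then obtain t where t: "t \<le> n" "nd P t0 = nd P t" "l = nd P (Suc t)" unfolding PA_def by auto
    then have "t = t0" using nd_inj[of t0 t P] assms by simp
    then show "l \<in> {nd P (Suc t0)}" using t by simp
  qed
qed

lemma out_PA0:
  assumes "k \<notin> nd P ` {0..n}"
  shows "{l. (k, l) \<in> PA P} = {}"
proof -
  have "(k, l) \<notin> PA P" for l
  proof
    assume "(k, l) \<in> PA P"
    then obtain t where "t \<le> n" "k = nd P t" unfolding PA_def by auto
    then have "k \<in> nd P ` {0..n}" by (intro image_eqI[of _ _ t]) auto
    then show False using assms by blast
  qed
  then show ?thesis by auto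
qed

lemma in_PA:
  assumes "1 \<le> t0" "t0 \<le> Suc n"
  shows "{l. (l, nd P t0) \<in> PA P} = {nd P (t0 - 1)}"
proof -
  have e: "Suc (t0 - 1) = t0" using assms by simp
  have m: "t0 - 1 \<in> {0..n}" using assms by simp
  have "(nd P (t0-1), nd P (Suc (t0 - 1))) \<in> PA P" unfolding PA_def
    by (rule imageI[OF m])
  then have "(nd P (t0-1), nd P t0) \<in> PA P" by (simp only: e)
  moreover have "l = nd P (t0 - 1)" if "(l, nd P t0) \<in> PA P" for l
  proof -
    from that obtain t where t: "t \<le> n" "l = nd P t" "nd P (Suc t) = nd P t0" unfolding PA_def by auto
    have "Suc t = t0" by (rule nd_inj[OF _ assms(2) t(3)]) (use t in simp)
    then have "t = t0 - 1" by simp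
    then show ?thesis using t(2) by simp
  qed
  ultimately show ?thesis by blast
qed

lemma in_PA0:
  assumes "k \<notin> nd P ` {1..Suc n}"
  shows "{l. (l, k) \<in> PA P} = {}"
proof -
  have "(l, k) \<notin> PA P" for l
  proof
    assume "(l, k) \<in> PA P"
    then obtain t where t: "t \<le> n" "k = nd P (Suc t)" unfolding PA_def by auto
    have "Suc t \<in> {1..Suc n}" using t(1) by simp
    then have "k \<in> nd P ` {1..Suc n}" unfolding t(2) by (rule imageI)
    then show False using assms by blast
  qed
  then show ?thesis by blast
qed

lemma path_flow:
  assumes P: "P \<in> TS 0 (0, - d0)"
  shows "flow_feasible GG AA (zP P)" and "(\<Sum>a\<in>AA. arc_len F a * zP P a) = len 0 P"
proof -
  note sub = PA_sub[OF P]
  have outc: "outf (zP P) k = real (card {l. (k, l) \<in> PA P})" for k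
    unfolding outf_def zP_def using sum_ind[OF finite_out, of "{l. (k, l) \<in> PA P}" k] sub by auto
  have inc: "inflow (zP P) k = real (card {l. (l, k) \<in> PA P})" for k
    unfolding inflow_def zP_def using sum_ind[OF finite_in, of "{l. (l, k) \<in> PA P}" k] sub by auto
  have o: "outf (zP P) k = (if k \<in> nd P ` {0..n} then 1 else 0)" for k
  proof (cases "k \<in> nd P ` {0..n}")
    case True then obtain t where "t \<le> n" "k = nd P t" by auto
    then show ?thesis using outc out_PA True by simp
  next
    case False then show ?thesis using outc out_PA0 by simp
  qed
  have i: "inflow (zP P) k = (if k \<in> nd P ` {1..Suc n} then 1 else 0)" for k
  proof (cases "k \<in> nd P ` {1..Suc n}")
    case True then obtain t where "1 \<le> t" "t \<le> Suc n" "k = nd P t" by auto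
    then show ?thesis using inc in_PA True by simp
  next
    case False then show ?thesis using inc in_PA0 by simp
  qed
  have src0: "Src = nd P 0" by (simp add: nd_def)
  have snk0: "Snk = nd P (Suc n)" by (simp add: nd_def)
  have srcn: "Src \<notin> nd P ` {1..Suc n}" by (auto simp: nd_def)
  have snkn: "Snk \<notin> nd P ` {0..n}" by (auto simp: nd_def)
  have oth: "k \<in> nd P ` {0..n} \<longleftrightarrow> k \<in> nd P ` {1..Suc n}" if "k \<noteq> Src" "k \<noteq> Snk" for k
  proof
    assume "k \<in> nd P ` {0..n}"
    then obtain t where t: "t \<le> n" "k = nd P t" by auto
    have "t \<noteq> 0"
    proof
      assume "t = 0" then have "k = Src" using t by (simp add: nd_def)
      with that show False by simp
    qed
    then show "k \<in> nd P ` {1..Suc n}" using t by auto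
  next
    assume "k \<in> nd P ` {1..Suc n}"
    then obtain t where t: "1 \<le> t" "t \<le> Suc n" "k = nd P t" by auto
    have "t \<noteq> Suc n"
    proof
      assume "t = Suc n" then have "k = Snk" using t by (simp add: nd_def)
      with that show False by simp
    qed
    then show "k \<in> nd P ` {0..n}" using t by auto
  qed
  show "flow_feasible GG AA (zP P)"
    unfolding flow_feasible_def
  proof (intro conjI ballI)
    fix a show "zP P a \<ge> 0" by (simp add: zP_def)
  next
    fix k assume "k \<in> GG"
    have "outf (zP P) k - inflow (zP P) k = (if k = Src then 1 else if k = Snk then -1 else 0)"
    proof (cases "k = Src")
      case True
      have a: "Src \<in> nd P ` {0..n}" unfolding src0 by (rule imageI) simp
      have "outf (zP P) Src = 1" using o[of Src] a by simp
      moreover have "inflow (zP P) Src = 0" using i[of Src] srcn by simp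
      ultimately show ?thesis using True by simp
    next
      case f1: False
      show ?thesis
      proof (cases "k = Snk")
        case True
        have b: "Snk \<in> nd P ` {1..Suc n}" unfolding snk0 by (rule imageI) simp
        have "outf (zP P) Snk = 0" using o[of Snk] snkn by simp
        moreover have "inflow (zP P) Snk = 1" using i[of Snk] b by simp
        ultimately show ?thesis using True by simp
      next
        case False then show ?thesis using o i oth[OF f1 False] f1 by simp
      qed
    qed
    then show "(\<Sum>l\<in>{l. (k,l) \<in> AA}. zP P (k,l)) - (\<Sum>l\<in>{l. (l,k) \<in> AA}. zP P (l,k))
              = (if k = Src then 1 else if k = Snk then -1 else 0)"
      unfolding outf_def inflow_def .
  qed
  have "(\<Sum>a\<in>AA. arc_len F a * zP P a) = (\<Sum>a\<in>AA. if a \<in> PA P then arc_len F a else 0)"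
    by (rule sum.cong) (auto simp: zP_def)
  also have "\<dots> = (\<Sum>a\<in>{a\<in>AA. a \<in> PA P}. arc_len F a)"
    by (rule sum.inter_filter[symmetric]) (rule finite_A)
  also have "{a\<in>AA. a \<in> PA P} = PA P" using sub by auto
  also have "(\<Sum>a\<in>PA P. arc_len F a) = (\<Sum>t\<in>{0..n}. arc_len F (nd P t, nd P (Suc t)))"
  proof -
    have inj: "inj_on (\<lambda>t. (nd P t, nd P (Suc t))) {0..n}"
    proof (rule inj_onI)
      fix x y assume "x \<in> {0..n}" "y \<in> {0..n}" "(nd P x, nd P (Suc x)) = (nd P y, nd P (Suc y))"
      then show "x = y" using nd_inj[of x y P] by simp
    qed
    show ?thesis unfolding PA_def by (rule sum.reindex_cong[OF inj]) simp_all
  qed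
  also have "\<dots> = (\<Sum>t\<in>{0..<n}. arc_len F (nd P t, nd P (Suc t))) + arc_len F (nd P n, nd P (Suc n))"
  proof -
    have "{0..n} = insert n {0..<n}" by auto
    then show ?thesis by (simp add: add.commute)
  qed
  also have "arc_len F (nd P n, nd P (Suc n)) = 0" using n1 by (simp add: nd_def)
  also have "(\<Sum>t\<in>{0..<n}. arc_len F (nd P t, nd P (Suc t))) = (\<Sum>t\<in>{0..<n}. F (Suc t) (lamP P (Suc t)) (snd (P (Suc t))))"
  proof (rule sum.cong)
    fix t assume t: "t \<in> {0..<n}"
    show "arc_len F (nd P t, nd P (Suc t)) = F (Suc t) (lamP P (Suc t)) (snd (P (Suc t)))"
    proof (cases "t = 0")
      case True then show ?thesis using TS0_props(1)[OF P] t by (simp add: nd_def lamP_def)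
    next
      case False then show ?thesis using t by (simp add: nd_def lamP_def)
    qed
  qed simp
  also have "\<dots> = len 0 P"
  proof -
    have e: "{Suc 0..n} = Suc ` {0..<n}"
      by (simp only: image_Suc_atLeastLessThan atLeastLessThanSuc_atLeastAtMost)
    show ?thesis unfolding len_def e by (subst sum.reindex) auto
  qed
  finally show "(\<Sum>a\<in>AA. arc_len F a * zP P a) = len 0 P" by simp
qed

lemma flow_main:
  "(\<exists>z. flow_feasible GG AA z \<and> (\<Sum>a\<in>AA. arc_len F a * z a) = V 0 (0, - d0)) \<and>
   (\<forall>z. flow_feasible GG AA z \<longrightarrow> (\<Sum>a\<in>AA. arc_len F a * z a) \<le> V 0 (0, - d0))"
proof
  have "(0::nat, - d0) \<in> NS 0" unfolding NS_def using neg_d0_Ycal by auto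
  have "live 0 (0, - d0)"
    unfolding live_def TS_def PS_def
  proof -
    let ?P = "\<lambda>t. if t \<le> n then (0::nat, - d0) else undefined"
    have "?P \<in> PiE {0..n} NS" using \<open>(0::nat, - d0) \<in> NS 0\<close> neg_d0_Ycal
      by (auto simp: PiE_iff extensional_def NS_def)
    moreover have "\<forall>t\<in>{Suc 0..n}. tr (?P (t-1)) (?P t)" by (auto simp: tr_def)
    ultimately show "{P \<in> {P \<in> PiE {0..n} NS. \<forall>t\<in>{Suc 0..n}. tr (P (t-1)) (P t)}. P 0 = (0, - d0)} \<noteq> {}"
      by force
  qed
  then obtain P where P: "P \<in> TS 0 (0, - d0)" "len 0 P = V 0 (0, - d0)" using V_attained by blast
  show "\<exists>z. flow_feasible GG AA z \<and> (\<Sum>a\<in>AA. arc_len F a * z a) = V 0 (0, - d0)"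
  proof (intro exI[of _ "zP P"] conjI)
    show "flow_feasible GG AA (zP P)" by (rule path_flow(1)[OF P(1)])
    show "(\<Sum>a\<in>AA. arc_len F a * zP P a) = V 0 (0, - d0)" using path_flow(2)[OF P(1)] P(2) by simp
  qed
  show "\<forall>z. flow_feasible GG AA z \<longrightarrow> (\<Sum>a\<in>AA. arc_len F a * z a) \<le> V 0 (0, - d0)"
    using flow_upper by blast
qed

end



lemma Ycal_ge: "y \<in> Ycal n d0 C t \<Longrightarrow> d0 \<ge> 0 \<Longrightarrow> C \<ge> 0 \<Longrightarrow> - d0 \<le> y"
  unfolding Ycal_def by auto

lemma Ycal_n_le: "y \<in> Ycal n d0 C n \<Longrightarrow> d0 \<ge> 0 \<Longrightarrow> C \<ge> 0 \<Longrightarrow> y \<le> C"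
  unfolding Ycal_def by auto

lemma Ycal_Suc:
  assumes "t < n" "y \<in> Ycal n d0 C (Suc t)" "l \<in> {0, 1}"
  shows "y + l \<in> Ycal n d0 C t"
proof -
  from assms(2) obtain m where m: "m \<le> n - Suc t" "y = - d0 + real m \<or> y = C + real m"
    unfolding Ycal_def by auto
  show ?thesis
  proof (cases "l = 0")
    case True
    then show ?thesis using m assms(1) unfolding Ycal_def by auto
  next
    case False
    then have l1: "l = 1" using assms(3) by auto
    have "Suc m \<le> n - t" using m(1) assms(1) by auto
    then show ?thesis using m(2) l1 unfolding Ycal_def
      by (auto intro!: exI[of _ "Suc m"])
  qed
qed

primrec lbar :: "(nat \<Rightarrow> real) \<Rightarrow> nat \<Rightarrow> nat" where
  "lbar lam 0 = 0"
| "lbar lam (Suc t) = lbar lam t + (if lam (Suc t) = 0 then 1 else 0)"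

lemma lbar_sum: "(\<forall>r\<in>{1..t}. lam r \<in> {0, 1}) \<Longrightarrow> real (lbar lam t) = (\<Sum>r=1..t. 1 - lam r)"
  by (induction t) auto

lemma lbar_lam: "lam (Suc t) \<in> {0, 1} \<Longrightarrow> real (lbar lam t) - real (lbar lam (Suc t)) + 1 = lam (Suc t)"
  by auto

lemma f_attain:
  fixes uL uU s muh lamh :: "nat \<Rightarrow> real" and y l rho p :: real and t :: nat
  assumes u: "0 \<le> uL t" "uL t < uU t" and l: "l \<in> {0, 1}" and rho: "rho \<ge> 0" and p: "p \<ge> 1"
  defines "h \<equiv> (\<lambda>mu. y * (mu - s t) - rho * \<bar>mu - muh t\<bar> powr p - rho * \<bar>l - lamh t\<bar> powr p)"
  shows "\<exists>mu. uL t * l \<le> mu \<and> mu \<le> uU t * l \<and> f_val uL uU p muh lamh s rho t l y = h mu"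
    and "\<And>mu. uL t * l \<le> mu \<Longrightarrow> mu \<le> uU t * l \<Longrightarrow> h mu \<le> f_val uL uU p muh lamh s rho t l y"
proof -
  let ?I = "{uL t * l .. uU t * l}"
  have ne: "?I \<noteq> {}" using u l by auto
  have cont: "continuous_on ?I h"
    unfolding h_def using p
    by (intro continuous_intros continuous_on_powr') auto
  obtain x where x: "x \<in> ?I" "\<forall>z\<in>?I. h z \<le> h x"
    using continuous_attains_sup[OF compact_Icc ne cont] by blast
  have set: "{y * (mu - s t) - rho * \<bar>mu - muh t\<bar> powr p - rho * \<bar>l - lamh t\<bar> powr p | mu. uL t * l \<le> mu \<and> mu \<le> uU t * l}
     = h ` ?I" unfolding h_def by auto
  have fv: "f_val uL uU p muh lamh s rho t l y = Sup (h ` ?I)"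
    unfolding f_val_def set ..
  have "Sup (h ` ?I) = h x"
    by (rule cSup_eq_maximum) (use x in auto)
  then show "\<exists>mu. uL t * l \<le> mu \<and> mu \<le> uU t * l \<and> f_val uL uU p muh lamh s rho t l y = h mu"
    using x fv by auto
  show "\<And>mu. uL t * l \<le> mu \<Longrightarrow> mu \<le> uU t * l \<Longrightarrow> h mu \<le> f_val uL uU p muh lamh s rho t l y"
    using x fv \<open>Sup (h ` ?I) = h x\<close> by auto
qed




lemma yg_Ycal:
  assumes lam: "\<forall>k\<in>{1..n}. lam k \<in> {0, 1}"
  shows "k \<le> n \<Longrightarrow> yg n C d0 lam w k \<in> Ycal n d0 C k"
proof (induction "n - k" arbitrary: k)
  case 0
  then have "k = n" by simp
  then show ?case by (simp add: yg_n neg_d0_Ycal C_Ycal)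
next
  case (Suc m)
  then have kn: "k < n" by simp
  have "yg n C d0 lam w (Suc k) \<in> Ycal n d0 C (Suc k)" using Suc.hyps(1)[of "Suc k"] Suc.hyps(2) by simp
  moreover have "lam (Suc k) \<in> {0, 1}" using lam kn by simp
  ultimately show ?case using kn Ycal_Suc[OF kn] by (simp add: yg_lt neg_d0_Ycal)
qed

lemma pen_split:
  fixes y mu lam s muh lamh :: "nat \<Rightarrow> real"
  shows "(\<Sum>k=1..n. y k * (mu k - s k)) - rho * ((\<Sum>i=1..n. \<bar>mu i - muh i\<bar> powr p) + (\<Sum>i=1..n. \<bar>lam i - lamh i\<bar> powr p))
    = (\<Sum>t=1..n. y t * (mu t - s t) - rho * \<bar>mu t - muh t\<bar> powr p - rho * \<bar>lam t - lamh t\<bar> powr p)"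
  by (simp add: sum_subtractf sum_distrib_left sum.distrib algebra_simps)

lemma sum_shift1: "(\<Sum>t=1..n. f t) = (\<Sum>t\<in>{0..<n}. f (Suc t) :: real)"
proof -
  have e: "{1..n} = Suc ` {0..<n}"
    by (simp only: image_Suc_atLeastLessThan atLeastLessThanSuc_atLeastAtMost One_nat_def)
  show ?thesis unfolding e by (subst sum.reindex) auto
qed

context net begin

lemma live0: "live 0 (0, - d0)"
proof -
  let ?P = "\<lambda>t. if t \<le> n then (0::nat, - d0) else undefined"
  have "?P \<in> PiE {0..n} NS" using neg_d0_Ycal
    by (auto simp: PiE_iff extensional_def NS_def)
  moreover have "\<forall>t\<in>{Suc 0..n}. tr (?P (t-1)) (?P t)" by (auto simp: tr_def)
  ultimately have "?P \<in> TS 0 (0, - d0)" unfolding TS_def PS_def by auto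
  then show ?thesis unfolding live_def by auto
qed

lemma omega_upper:
  fixes uL uU s muh lamh mu lam :: "nat \<Rightarrow> real" and rho p :: real
  assumes FF: "F = f_val uL uU p muh lamh s rho"
    and u: "\<forall>i\<in>{1..n}. 0 \<le> uL i \<and> uL i < uU i" and rho: "rho \<ge> 0" and p: "p \<ge> 1"
    and X: "in_Xi n K uL uU mu lam"
  shows "g_val n d0 C s mu lam - rho * ((\<Sum>i=1..n. \<bar>mu i - muh i\<bar> powr p) + (\<Sum>i=1..n. \<bar>lam i - lamh i\<bar> powr p))
     \<le> V 0 (0, - d0)"
proof -
  have lam01: "\<forall>k\<in>{1..n}. lam k \<in> {0, 1}" and sK: "(\<Sum>i=1..n. 1 - lam i) \<le> real K"
    and mub: "\<forall>i\<in>{1..n}. uL i * lam i \<le> mu i \<and> mu i \<le> uU i * lam i"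
    using X unfolding in_Xi_def by auto
  have lam0: "\<forall>k\<in>{1..n}. lam k \<ge> 0" using lam01 by auto
  define c where "c = (\<lambda>k. mu k - s k)"
  define y where "y = yg n C d0 lam (wg c)"
  have gv: "g_val n d0 C s mu lam = (\<Sum>k=1..n. y k * (mu k - s k))"
    unfolding y_def c_def by (rule g_val_eq[OF n1 lam0 d0 C0])
  define P where "P = (\<lambda>t. if t = 0 then (0::nat, - d0) else if t \<le> n then (lbar lam t, y t) else undefined)"
  have lbK: "lbar lam t \<le> K" if "t \<le> n" for t
  proof -
    have "real (lbar lam t) = (\<Sum>r=1..t. 1 - lam r)" using lam01 that by (intro lbar_sum) auto
    also have "\<dots> \<le> (\<Sum>r=1..n. 1 - lam r)"
    proof (rule sum_mono2)
      fix b assume "b \<in> {1..n} - {1..t}"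
      then have "lam b \<in> {0,1}" using lam01 by auto
      then show "0 \<le> 1 - lam b" by auto
    qed (use that in auto)
    finally show ?thesis using sK by linarith
  qed
  have fstP: "fst (P t) = lbar lam t" if "t \<le> n" for t using that by (simp add: P_def)
  have lamPe: "lamP P t = lam t" if tt: "t \<in> {1..n}" for t
  proof -
    obtain r where r: "t = Suc r" using tt by (cases t) auto
    have "lam (Suc r) \<in> {0,1}" using lam01 that r by auto
    then show ?thesis unfolding lamP_def using fstP[of r] fstP[of t] tt r lbar_lam[of lam r] by simp
  qed
  have PT: "P \<in> TS 0 (0, - d0)"
    unfolding TS_def PS_def
  proof (intro CollectI conjI ballI)
    show "P \<in> PiE {0..n} NS"
    proof (unfold PiE_iff, intro conjI ballI)
      fix t assume t: "t \<in> {0..n}"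
      show "P t \<in> NS t"
      proof (cases "t = 0")
        case True then show ?thesis by (simp add: P_def NS_def neg_d0_Ycal)
      next
        case False
        then have "y t \<in> Ycal n d0 C t" unfolding y_def using yg_Ycal[OF lam01] t by simp
        then show ?thesis using False t lbK[of t] by (simp add: P_def NS_def)
      qed
    next
      show "P \<in> extensional {0..n}" by (auto simp: P_def extensional_def)
    qed
  next
    fix t assume t: "t \<in> {Suc 0..n}"
    obtain r where r: "t = Suc r" using t by (cases t) auto
    have l: "lam t \<in> {0,1}" using lam01 t by auto
    have f: "fst (P t) = fst (P (t-1)) \<or> fst (P t) = Suc (fst (P (t-1)))"
      using fstP[of t] fstP[of r] t r by auto
    have sn: "snd (P (t-1)) = - d0 \<or> snd (P (t-1)) = snd (P t) + (real (fst (P (t-1))) - real (fst (P t)) + 1)"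
    proof (cases "r = 0")
      case True then show ?thesis using r by (simp add: P_def)
    next
      case False
      have rn: "r < n" using t r by simp
      have "y r = (if wg c (Suc r) > 0 then y (Suc r) + lam (Suc r) else - d0)"
        unfolding y_def by (rule yg_lt[OF rn])
      moreover have "lam (Suc r) = real (fst (P (t-1))) - real (fst (P t)) + 1"
        using lamPe[of t] t r unfolding lamP_def by simp
      ultimately show ?thesis using False r rn by (auto simp: P_def)
    qed
    show "tr (P (t-1)) (P t)" unfolding tr_def using f sn by auto
  next
    show "P 0 = (0, - d0)" by (simp add: P_def)
  qed
  have lenP: "len 0 P = (\<Sum>t=1..n. F t (lam t) (y t))"
    unfolding len_def
  proof (rule sum.cong)
    show "{Suc 0..n} = {1..n}" by simp
  next
    fix t assume t: "t \<in> {1..n}"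
    have "snd (P t) = y t" using t by (simp add: P_def)
    then show "F t (lamP P t) (snd (P t)) = F t (lam t) (y t)" using lamPe[of t] t by simp
  qed
  have "g_val n d0 C s mu lam - rho * ((\<Sum>i=1..n. \<bar>mu i - muh i\<bar> powr p) + (\<Sum>i=1..n. \<bar>lam i - lamh i\<bar> powr p))
      = (\<Sum>t=1..n. y t * (mu t - s t) - rho * \<bar>mu t - muh t\<bar> powr p - rho * \<bar>lam t - lamh t\<bar> powr p)"
    unfolding gv by (rule pen_split)
  also have "\<dots> \<le> (\<Sum>t=1..n. F t (lam t) (y t))"
  proof (rule sum_mono)
    fix t assume t: "t \<in> {1..n}"
    show "y t * (mu t - s t) - rho * \<bar>mu t - muh t\<bar> powr p - rho * \<bar>lam t - lamh t\<bar> powr p \<le> F t (lam t) (y t)"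
      unfolding FF by (rule f_attain(2)) (use u t lam01 rho p mub in auto)
  qed
  also have "\<dots> = len 0 P" using lenP by simp
  also have "\<dots> \<le> V 0 (0, - d0)" by (rule V_ge[OF PT])
  finally show ?thesis .
qed

lemma omega_lower:
  fixes uL uU s muh lamh :: "nat \<Rightarrow> real" and rho p :: real
  assumes FF: "F = f_val uL uU p muh lamh s rho"
    and u: "\<forall>i\<in>{1..n}. 0 \<le> uL i \<and> uL i < uU i" and rho: "rho \<ge> 0" and p: "p \<ge> 1"
  shows "\<exists>mu lam. in_Xi n K uL uU mu lam \<and> V 0 (0, - d0) \<le>
     g_val n d0 C s mu lam - rho * ((\<Sum>i=1..n. \<bar>mu i - muh i\<bar> powr p) + (\<Sum>i=1..n. \<bar>lam i - lamh i\<bar> powr p))"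
proof -
  obtain P where P: "P \<in> TS 0 (0, - d0)" "len 0 P = V 0 (0, - d0)" using V_attained[OF live0] by blast
  have P0: "P 0 = (0, - d0)" and PN: "\<And>t. t \<le> n \<Longrightarrow> P t \<in> NS t"
    and Ptr: "\<And>t. 1 \<le> t \<Longrightarrow> t \<le> n \<Longrightarrow> tr (P (t-1)) (P t)"
    using P(1) unfolding TS_def PS_def by (auto simp: PiE_iff)
  define lam where "lam = lamP P"
  define y where "y = (\<lambda>t. snd (P t))"
  have lam01: "\<forall>k\<in>{1..n}. lam k \<in> {0, 1}"
  proof
    fix k assume k: "k \<in> {1..n}"
    then have "tr (P (k-1)) (P k)" using Ptr by auto
    then show "lam k \<in> {0,1}" unfolding lam_def lamP_def tr_def by auto
  qed
  have lam0: "\<forall>k\<in>{1..n}. lam k \<ge> 0" using lam01 by auto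
  define h where "h = (\<lambda>t mu. y t * (mu - s t) - rho * \<bar>mu - muh t\<bar> powr p - rho * \<bar>lam t - lamh t\<bar> powr p)"
  have ex: "\<exists>mu. uL t * lam t \<le> mu \<and> mu \<le> uU t * lam t \<and> F t (lam t) (y t) = h t mu" if t: "t \<in> {1..n}" for t
    unfolding FF h_def by (rule f_attain(1)) (use u t lam01 rho p in auto)
  define mu where "mu = (\<lambda>t. SOME mu. uL t * lam t \<le> mu \<and> mu \<le> uU t * lam t \<and> F t (lam t) (y t) = h t mu)"
  have mu: "uL t * lam t \<le> mu t \<and> mu t \<le> uU t * lam t \<and> F t (lam t) (y t) = h t (mu t)" if "t \<in> {1..n}" for t
    unfolding mu_def using someI_ex[OF ex[OF that]] .
  have telesc: "(\<Sum>i=1..n. 1 - lam i) = real (fst (P n))"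
  proof -
    have "(\<Sum>i=1..n. 1 - lam i) = (\<Sum>i\<in>{0..<n}. 1 - lam (Suc i))" by (rule sum_shift1)
    also have "\<dots> = (\<Sum>i\<in>{0..<n}. real (fst (P (Suc i))) - real (fst (P i)))"
      unfolding lam_def lamP_def by simp
    also have "\<dots> = real (fst (P n)) - real (fst (P 0))" by (rule sum_Suc_diff') simp
    finally show ?thesis using P0 by simp
  qed
  have X: "in_Xi n K uL uU mu lam"
    unfolding in_Xi_def
  proof (intro conjI)
    show "\<forall>i\<in>{1..n}. lam i \<in> {0, 1}" by (rule lam01)
    have "fst (P n) \<le> K" using PN[of n] by (auto simp: NS_def)
    then show "(\<Sum>i=1..n. 1 - lam i) \<le> real K" unfolding telesc by simp
    show "\<forall>i\<in>{1..n}. uL i * lam i \<le> mu i \<and> mu i \<le> uU i * lam i" using mu by blast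
  qed
  have yY: "y t \<in> Ycal n d0 C t" if "t \<le> n" for t using PN[OF that] by (auto simp: NS_def y_def)
  have df: "dfeas n d0 C lam y"
    unfolding dfeas_def
  proof (intro conjI ballI)
    fix k assume "k \<in> {1..n}" then show "y k \<ge> - d0" using Ycal_ge[OF yY[of k] d0 C0] by auto
  next
    fix k assume k: "k \<in> {2..n}"
    then have tk: "tr (P (k-1)) (P k)" using Ptr by auto
    have "y k \<ge> - d0" using Ycal_ge[OF yY[of k] d0 C0] k by auto
    moreover have "lam k \<ge> 0" using lam0 k by auto
    ultimately show "y (k-1) \<le> y k + lam k" using tk unfolding tr_def y_def lam_def lamP_def by auto
  next
    show "y n \<le> C" using Ycal_n_le[OF yY[of n] d0 C0] by auto
  qed
  have "V 0 (0, - d0) = (\<Sum>t=1..n. F t (lam t) (y t))"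
    using P(2) unfolding len_def lam_def y_def by simp
  also have "\<dots> = (\<Sum>t=1..n. y t * (mu t - s t) - rho * \<bar>mu t - muh t\<bar> powr p - rho * \<bar>lam t - lamh t\<bar> powr p)"
    by (rule sum.cong) (auto simp: mu h_def)
  also have "\<dots> = (\<Sum>k=1..n. y k * (mu k - s k)) - rho * ((\<Sum>i=1..n. \<bar>mu i - muh i\<bar> powr p) + (\<Sum>i=1..n. \<bar>lam i - lamh i\<bar> powr p))"
    by (rule pen_split[symmetric])
  also have "\<dots> \<le> g_val n d0 C s mu lam - rho * ((\<Sum>i=1..n. \<bar>mu i - muh i\<bar> powr p) + (\<Sum>i=1..n. \<bar>lam i - lamh i\<bar> powr p))"
    using g_val_ge[OF n1 lam0 df, of mu s] by simp
  finally show ?thesis using X by blast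
qed

lemma omega_eq:
  fixes uL uU s muh lamh :: "nat \<Rightarrow> real" and rho p :: real
  assumes FF: "F = f_val uL uU p muh lamh s rho"
    and u: "\<forall>i\<in>{1..n}. 0 \<le> uL i \<and> uL i < uU i" and rho: "rho \<ge> 0" and p: "p \<ge> 1"
  shows "omega' n K d0 C uL uU p muh lamh s rho = V 0 (0, - d0)"
proof -
  let ?S = "{g_val n d0 C s mu lam
      - rho * ((\<Sum>i=1..n. \<bar>mu i - muh i\<bar> powr p) + (\<Sum>i=1..n. \<bar>lam i - lamh i\<bar> powr p)) | mu lam.
      in_Xi n K uL uU mu lam}"
  have om: "omega' n K d0 C uL uU p muh lamh s rho = Sup ?S" unfolding omega'_def ..
  obtain mu lam where ml: "in_Xi n K uL uU mu lam" "V 0 (0, - d0) \<le>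
     g_val n d0 C s mu lam - rho * ((\<Sum>i=1..n. \<bar>mu i - muh i\<bar> powr p) + (\<Sum>i=1..n. \<bar>lam i - lamh i\<bar> powr p))"
    using omega_lower[OF FF u rho p] by blast
  have up: "\<forall>x\<in>?S. x \<le> V 0 (0, - d0)" using omega_upper[OF FF u rho p] by blast
  have ne: "?S \<noteq> {}" using ml(1) by blast
  have bdd: "bdd_above ?S" using up by (auto simp: bdd_above_def)
  have "Sup ?S \<le> V 0 (0, - d0)" using ne up by (intro cSup_least) auto
  moreover have "V 0 (0, - d0) \<le> Sup ?S"
    using ml(2) cSup_upper[OF _ bdd, of "g_val n d0 C s mu lam - rho * ((\<Sum>i=1..n. \<bar>mu i - muh i\<bar> powr p) + (\<Sum>i=1..n. \<bar>lam i - lamh i\<bar> powr p))"] ml(1)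
    by fastforce
  ultimately show ?thesis unfolding om by linarith
qed

end

theorem proposition5:
  fixes n N K j :: nat and T d0 C rho p :: real
    and uL uU s :: "nat \<Rightarrow> real"
    and muh lamh :: "nat \<Rightarrow> nat \<Rightarrow> real"
  assumes "n \<ge> 1" and "N \<ge> 1" and "T > 0"
    and "d0 \<ge> 0" and "C \<ge> 0"
    and "\<forall>i\<in>{1..n}. 0 \<le> uL i \<and> uL i < uU i"
    and "1 \<le> K" and "K \<le> n"
    and "\<forall>j'\<in>{1..N}. in_Xi n K uL uU (muh j') (lamh j')"
    and "j \<in> {1..N}" and "rho \<ge> 0" and "p \<ge> 1"
    and "\<forall>i\<in>{1..n}. s i \<ge> 0" and "(\<Sum>i=1..n. s i) \<le> T"
  shows "let F = f_val uL uU p (muh j) (lamh j) s rho;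
             G = Nodes n K d0 C; A = Arcs n K d0 C;
             w = omega' n K d0 C uL uU p (muh j) (lamh j) s rho
         in (\<exists>z. flow_feasible G A z \<and> (\<Sum>a\<in>A. arc_len F a * z a) = w) \<and>
            (\<forall>z. flow_feasible G A z \<longrightarrow> (\<Sum>a\<in>A. arc_len F a * z a) \<le> w)"
proof -
  interpret NN: net n K d0 C "f_val uL uU p (muh j) (lamh j) s rho"
    by unfold_locales (use assms in auto)
  have om: "omega' n K d0 C uL uU p (muh j) (lamh j) s rho = NN.V 0 (0, - d0)"
    by (rule NN.omega_eq) (use assms in auto)
  show ?thesis unfolding Let_def om using NN.flow_main by simp
qed

end
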